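(* Let $(X,c)$ be a finite metric space with $n$ points and let $1\le k\le n$. For every execution of the Reverse Greedy algorithm (with arbitrary tie-breaking), the set $R_k$ it produces satisfies $$\mathrm{cost}(R_k) \;\le\; 2H_{n-k}\cdot \min_{F\subseteq X,\ |F|=k}\mathrm{cost}(F),$$ where $H_m = \sum_{i=1}^m 1/i$ is the $m$-th harmonic number ($H_0=0$). In particular, the approximation ratio of Reverse Greedy for the metric $k$-median problem is $O(\log n)$.
   Context: For $x\in X$ and nonempty $F\subseteq X$, $c_{xF}=\min_{f\in F}c_{xf}$, and $\mathrm{cost}(F)=\sum_{x\in X} c_{xF}$. The Reverse Greedy algorithm on an $n$-point space $X$: set $R_n = X$; for $t = n, n-1,\dots,2$, set $R_{t-1} = R_t\setminus\{r_t\}$ where $r_t\in R_t$ is chosen (ties broken arbitrarily) to minimize $\mathrm{cost}(R_{t-1})$. *)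

theory Defs
  imports "HOL-Analysis.Analysis"
begin

definition finite_metric_space :: "'a set \<Rightarrow> ('a \<Rightarrow> 'a \<Rightarrow> real) \<Rightarrow> bool" where
  "finite_metric_space X c \<longleftrightarrow> finite X \<and>
     (\<forall>x\<in>X. \<forall>y\<in>X. c x y \<ge> 0) \<and>
     (\<forall>x\<in>X. \<forall>y\<in>X. c x y = 0 \<longleftrightarrow> x = y) \<and>
     (\<forall>x\<in>X. \<forall>y\<in>X. c x y = c y x) \<and>
     (\<forall>x\<in>X. \<forall>y\<in>X. \<forall>z\<in>X. c x z \<le> c x y + c y z)"

definition dist_to_set :: "('a \<Rightarrow> 'a \<Rightarrow> real) \<Rightarrow> 'a \<Rightarrow> 'a set \<Rightarrow> real" where
  "dist_to_set c x F = Min ((\<lambda>f. c x f) ` F)"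

definition cost :: "'a set \<Rightarrow> ('a \<Rightarrow> 'a \<Rightarrow> real) \<Rightarrow> 'a set \<Rightarrow> real" where
  "cost X c F = (\<Sum>x\<in>X. dist_to_set c x F)"

definition reverse_greedy_run :: "'a set \<Rightarrow> ('a \<Rightarrow> 'a \<Rightarrow> real) \<Rightarrow> (nat \<Rightarrow> 'a set) \<Rightarrow> bool" where
  "reverse_greedy_run X c R \<longleftrightarrow>
     R (card X) = X \<and>
     (\<forall>t\<in>{2..card X}. \<exists>r\<in>R t. R (t - 1) = R t - {r} \<and>
        (\<forall>r'\<in>R t. cost X c (R t - {r}) \<le> cost X c (R t - {r'})))"

end

theory Submission
  imports Defs
begin

lemma dts_le: "finite A \<Longrightarrow> a \<in> A \<Longrightarrow> dist_to_set c x A \<le> c x a"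
  unfolding dist_to_set_def by (rule Min_le) auto

lemma dts_in: "finite A \<Longrightarrow> A \<noteq> {} \<Longrightarrow> \<exists>a\<in>A. dist_to_set c x A = c x a"
proof -
  assume "finite A" "A \<noteq> {}"
  then have "Min ((\<lambda>f. c x f) ` A) \<in> (\<lambda>f. c x f) ` A" by (intro Min_in) auto
  then show ?thesis unfolding dist_to_set_def by auto
qed

lemma dts_anti: "finite B \<Longrightarrow> A \<subseteq> B \<Longrightarrow> A \<noteq> {} \<Longrightarrow> dist_to_set c x B \<le> dist_to_set c x A"
  unfolding dist_to_set_def by (rule Min_antimono) auto

lemma cost_anti:
  assumes "finite X" "finite B" "A \<subseteq> B" "A \<noteq> {}"
  shows "cost X c B \<le> cost X c A"
  unfolding cost_def by (intro sum_mono dts_anti) (use assms in auto)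

lemma dts_nonneg:
  assumes "finite_metric_space X c" "x \<in> X" "F \<subseteq> X" "F \<noteq> {}" "finite F"
  shows "dist_to_set c x F \<ge> 0"
proof -
  obtain a where "a \<in> F" "dist_to_set c x F = c x a" using dts_in[OF assms(5,4)] by blast
  then show ?thesis using assms(1,2,3) unfolding finite_metric_space_def by auto
qed

lemma key:
  assumes M: "finite_metric_space X c" and RX: "R \<subseteq> X" and FX: "F \<subseteq> X"
    and Fne: "F \<noteq> {}" and cF: "card F = k" and Rne: "R \<noteq> {}"
  shows "\<exists>D\<subseteq>R. card R - k \<le> card D \<and>
     (\<Sum>r\<in>D. cost X c (R - {r}) - cost X c R) \<le> 2 * cost X c F"
proof -
  have fX: "finite X" using M unfolding finite_metric_space_def by auto
  have fR: "finite R" using fX RX finite_subset by blast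
  have fF: "finite F" using fX FX finite_subset by blast
  have sym: "\<And>x y. x \<in> X \<Longrightarrow> y \<in> X \<Longrightarrow> c x y = c y x"
    using M unfolding finite_metric_space_def by auto
  have tri: "\<And>x y z. x \<in> X \<Longrightarrow> y \<in> X \<Longrightarrow> z \<in> X \<Longrightarrow> c x z \<le> c x y + c y z"
    using M unfolding finite_metric_space_def by auto
  define a where "a x = (SOME r. r \<in> R \<and> dist_to_set c x R = c x r)" for x
  define g where "g x = (SOME f. f \<in> F \<and> dist_to_set c x F = c x f)" for x
  define p where "p x = (SOME r. r \<in> R \<and> dist_to_set c x R = c x r)" for x
  have a: "a x \<in> R \<and> dist_to_set c x R = c x (a x)" for x
    unfolding a_def using dts_in[OF fR Rne] by (metis (mono_tags, lifting) someI_ex)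
  have g: "g x \<in> F \<and> dist_to_set c x F = c x (g x)" for x
    unfolding g_def using dts_in[OF fF Fne] by (metis (mono_tags, lifting) someI_ex)
  have p: "p x \<in> R \<and> dist_to_set c x R = c x (p x)" for x
    unfolding p_def using dts_in[OF fR Rne] by (metis (mono_tags, lifting) someI_ex)
  define D where "D = R - p ` F"
  have cD: "card R - k \<le> card D"
  proof -
    have "card (p ` F) \<le> k" using card_image_le[OF fF] cF by simp
    moreover have "card D \<ge> card R - card (p ` F)"
      unfolding D_def by (rule diff_card_le_card_Diff) (use fF in auto)
    ultimately show ?thesis by linarith
  qed
  define h where "h x = 2 * dist_to_set c x F" for x
  have pt: "dist_to_set c x (R - {r}) - dist_to_set c x R \<le> (if a x = r then h x else 0)"
    if x: "x \<in> X" and r: "r \<in> D" for x r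
  proof (cases "a x = r")
    case True
    have gx: "g x \<in> X" using g FX by blast
    have pg: "p (g x) \<in> R - {r}" using p g r unfolding D_def by blast
    have "dist_to_set c x (R - {r}) \<le> c x (p (g x))" by (rule dts_le) (use fR pg in auto)
    also have "\<dots> \<le> c x (g x) + c (g x) (p (g x))" using tri x gx p RX by blast
    also have "c (g x) (p (g x)) \<le> c (g x) r" using p[of "g x"] dts_le[OF fR, of r c "g x"] r
      unfolding D_def by auto
    also have "\<dots> \<le> c (g x) x + c x r" using tri x gx r RX unfolding D_def by blast
    finally show ?thesis using True a[of x] g[of x] sym[OF x gx] unfolding h_def by simp
  next
    case False
    have "a x \<in> R - {r}" using a False by blast
    then have "dist_to_set c x (R - {r}) \<le> c x (a x)" by (intro dts_le) (use fR in auto)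
    then show ?thesis using a False by simp
  qed
  have "(\<Sum>r\<in>D. cost X c (R - {r}) - cost X c R)
      = (\<Sum>r\<in>D. \<Sum>x\<in>X. dist_to_set c x (R - {r}) - dist_to_set c x R)"
    unfolding cost_def by (simp add: sum_subtractf)
  also have "\<dots> \<le> (\<Sum>r\<in>D. \<Sum>x\<in>X. (if a x = r then h x else 0))"
    by (intro sum_mono pt)
  also have "\<dots> = (\<Sum>x\<in>X. \<Sum>r\<in>D. (if a x = r then h x else 0))" by (rule sum.swap)
  also have "\<dots> = (\<Sum>x\<in>X. (if a x \<in> D then h x else 0))"
    using fR D_def by (intro sum.cong refl) (simp add: sum.delta' finite_subset)
  also have "\<dots> \<le> (\<Sum>x\<in>X. h x)"
  proof (intro sum_mono)
    fix x assume "x \<in> X"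
    then have "h x \<ge> 0" unfolding h_def using dts_nonneg[OF M _ FX Fne fF] by auto
    then show "(if a x \<in> D then h x else 0) \<le> h x" by simp
  qed
  also have "\<dots> = 2 * cost X c F" unfolding h_def cost_def by (simp add: sum_distrib_left)
  finally show ?thesis using cD D_def by blast
qed

lemma run_card:
  assumes "finite X" "reverse_greedy_run X c R"
  shows "j < card X \<Longrightarrow> R (card X - j) \<subseteq> X \<and> card (R (card X - j)) = card X - j"
proof (induction j)
  case 0
  then show ?case using assms unfolding reverse_greedy_run_def by auto
next
  case (Suc j)
  let ?t = "card X - j"
  have t2: "?t \<in> {2..card X}" using Suc by auto
  obtain r where r: "r \<in> R ?t" "R (?t - 1) = R ?t - {r}"
    using assms(2) t2 unfolding reverse_greedy_run_def by blast
  have IH: "R ?t \<subseteq> X" "card (R ?t) = ?t" using Suc by auto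
  have fin: "finite (R ?t)" using IH(1) assms(1) finite_subset by blast
  have e: "card X - Suc j = ?t - 1" by simp
  show ?case unfolding e r(2) using IH r(1) fin by auto
qed

theorem mainTheorem4:
  fixes X :: "'a set" and c :: "'a \<Rightarrow> 'a \<Rightarrow> real" and R :: "nat \<Rightarrow> 'a set" and k :: nat
  assumes "finite_metric_space X c"
    and "reverse_greedy_run X c R"
    and "1 \<le> k" and "k \<le> card X"
  shows "cost X c (R k) \<le>
           2 * harm (card X - k) * Min {cost X c F | F. F \<subseteq> X \<and> card F = k}"
proof -
  note M = assms(1)
  have fX: "finite X" using M unfolding finite_metric_space_def by auto
  let ?n = "card X"
  have Rt: "R t \<subseteq> X \<and> card (R t) = t" if "1 \<le> t" "t \<le> ?n" for t
    using run_card[OF fX assms(2), of "?n - t"] that by auto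
  let ?S = "{cost X c F | F. F \<subseteq> X \<and> card F = k}"
  have "?S = (\<lambda>F. cost X c F) ` {F. F \<subseteq> X \<and> card F = k}" by auto
  moreover have "finite {F. F \<subseteq> X \<and> card F = k}" using fX by simp
  ultimately have fS: "finite ?S" by simp
  obtain F0 where F0: "F0 \<subseteq> X" "card F0 = k" using assms(4) by (meson obtain_subset_with_card_n)
  then have "?S \<noteq> {}" by auto
  then have "Min ?S \<in> ?S" using fS by (rule Min_in[rotated])
  then obtain F where F: "F \<subseteq> X" "card F = k" "cost X c F = Min ?S" by auto
  have Fne: "F \<noteq> {}" using F assms(3) by auto
  define OPT where "OPT = cost X c F"
  have step: "cost X c (R (t - 1)) - cost X c (R t) \<le> 2 * OPT / real (t - k)"
    if t: "k < t" "t \<le> ?n" for t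
  proof -
    have t2: "t \<in> {2..?n}" using t assms(3) by auto
    obtain r where r: "r \<in> R t" "R (t - 1) = R t - {r}"
      "\<forall>r'\<in>R t. cost X c (R t - {r}) \<le> cost X c (R t - {r'})"
      using assms(2) t2 unfolding reverse_greedy_run_def by blast
    have RtX: "R t \<subseteq> X" "card (R t) = t" using Rt t assms(3) by auto
    have fRt: "finite (R t)" using RtX fX finite_subset by blast
    have Rne: "R t \<noteq> {}" using RtX t by auto
    obtain D where D: "D \<subseteq> R t" "card (R t) - k \<le> card D"
      "(\<Sum>r\<in>D. cost X c (R t - {r}) - cost X c (R t)) \<le> 2 * cost X c F"
      using key[OF M RtX(1) F(1) Fne F(2) Rne] by blast
    define d where "d = cost X c (R t - {r}) - cost X c (R t)"
    have d0: "d \<ge> 0"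
    proof -
      have "card (R t - {r}) = t - 1" using RtX r(1) fRt by simp
      moreover have "t - 1 > 0" using t assms(3) by linarith
      ultimately have "card (R t - {r}) > 0" by simp
      then have "R t - {r} \<noteq> {}" by (simp add: card_gt_0_iff)
      then show ?thesis unfolding d_def using cost_anti[OF fX fRt, of "R t - {r}" c] by auto
    qed
    have "real (t - k) * d \<le> real (card D) * d"
      using D(2) RtX d0 by (intro mult_right_mono) auto
    also have "\<dots> = (\<Sum>r\<in>D. d)" by simp
    also have "\<dots> \<le> (\<Sum>r'\<in>D. cost X c (R t - {r'}) - cost X c (R t))"
      using r(3) D(1) unfolding d_def by (intro sum_mono) auto
    also have "\<dots> \<le> 2 * OPT" using D(3) OPT_def by simp
    finally have "real (t - k) * d \<le> 2 * OPT" .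
    moreover have "real (t - k) > 0" using t by simp
    ultimately have "d \<le> 2 * OPT / real (t - k)" by (simp add: field_simps)
    then show ?thesis using r(2) d_def by simp
  qed
  have ind: "k + m \<le> ?n \<Longrightarrow> cost X c (R k) \<le> cost X c (R (k + m)) + 2 * OPT * harm m" for m
  proof (induction m)
    case 0
    then show ?case by (simp add: harm_expand)
  next
    case (Suc m)
    have "cost X c (R (k + m)) - cost X c (R (k + Suc m)) \<le> 2 * OPT / real (k + Suc m - k)"
      using step[of "k + Suc m"] Suc.prems by simp
    then have h: "cost X c (R (k + m)) \<le> cost X c (R (k + Suc m)) + 2 * OPT / real (Suc m)" by simp
    have IH: "cost X c (R k) \<le> cost X c (R (k + m)) + 2 * OPT * harm m" using Suc by simp
    have e: "2 * OPT * harm (Suc m) = 2 * OPT * harm m + 2 * OPT / real (Suc m)"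
      by (simp add: harm_Suc distrib_left divide_inverse)
    show ?case using h IH e by linarith
  qed
  have "cost X c (R ?n) = 0"
  proof -
    have "R ?n = X" using assms(2) unfolding reverse_greedy_run_def by auto
    moreover have "dist_to_set c x X = 0" if "x \<in> X" for x
    proof -
      have "dist_to_set c x X \<le> c x x" using dts_le[OF fX that] .
      moreover have "c x x = 0" using M that unfolding finite_metric_space_def by auto
      moreover have "dist_to_set c x X \<ge> 0" using dts_nonneg[OF M that] fX that by auto
      ultimately show ?thesis by linarith
    qed
    ultimately show ?thesis unfolding cost_def by simp
  qed
  then show ?thesis using ind[of "?n - k"] assms(4) F(3) OPT_def by (simp add: mult_ac)
qed

end
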